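(* Let $(M,F)$ be a conic pseudo-Finsler surface and $\overline F=e^\phi F$ an anisotropic conformal change. Then $$\phi_{;2}P+P_{;2}+\varepsilon\phi_{;2}Q_{;2}-(\mathcal I\phi_{;2}+1)Q-F^2\phi_{,2}=0.$$
   Context: Throughout, $M$ is a smooth $2$-dimensional manifold, $TM_0$ its slit tangent bundle with induced local coordinates $(x^i,y^i)$, $\partial_i=\partial/\partial x^i$, $\dot\partial_i=\partial/\partial y^i$. A function is called $h(r)$ if it is positively homogeneous of degree $r$ in $y$. A conic pseudo-Finsler surface $(M,F)$ consists of a conic subbundle $\mathcal A\subset TM_0$ (an open set invariant under $y\mapsto\lambda y$, $\lambda>0$, projecting onto $M$) and a smooth $h(1)$ function $F:\mathcal A\to\mathbb R$ such that $g_{ij}=\frac12\dot\partial_i\dot\partial_jF^2$ is nondegenerate. Put $\ell_i=\dot\partial_iF$, $\ell^i=y^i/F$. Modified Berwald frame: $\varepsilon\in\{1,-1\}$ and a covector $m_i$ satisfy $g_{ij}=\ell_i\ell_j+\varepsilon m_im_j$, $m^i=g^{ij}m_j$, so $\ell^i\ell_i=1$, $\ell^im_i=0$, $m^im_i=\varepsilon$. The main scalar $\mathcal I$ ($h(0)$) is defined by $FC_{ijk}=\mathcal I\,m_im_jm_k$, where $C_{ijk}=\frac14\dot\partial_i\dot\partial_j\dot\partial_kF^2$. The geodesic spray of $F$ is $S=y^i\partial_i-2G^i\dot\partial_i$; $G^i_j=\dot\partial_jG^i$, $\delta_i=\partial_i-G^j_i\dot\partial_j$. For a smooth function $f$: $f_{;1}=y^i\dot\partial_if$,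 $f_{;2}=\varepsilon Fm^i\dot\partial_if$, $f_{,1}=\ell^i\delta_if$, $f_{,2}=\varepsilon m^i\delta_if$; iterated derivatives are read left to right, e.g. $f_{,1;2}=(f_{,1})_{;2}$. Anisotropic conformal change: $\phi$ is a smooth $h(0)$ function on $\mathcal A$ with $F^2(\dot\partial_i\dot\partial_j\phi+\dot\partial_i\phi\,\dot\partial_j\phi)m^im^j+\varepsilon\ne0$, and $\overline F=e^{\phi}F$. Set $\sigma=\phi_{;2;2}+\varepsilon\mathcal I\phi_{;2}+2(\phi_{;2})^2$, $\rho=1/(\sigma+\varepsilon-(\phi_{;2})^2)$, $2Q=\varepsilon\rho F^2(\phi_{;2}\phi_{,1}+\phi_{,1;2}-2\phi_{,2})$, $2P=-\rho F^2\phi_{;2}(\phi_{;2}\phi_{,1}+\phi_{,1;2}-2\phi_{,2})+F^2\phi_{,1}$. *)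

theory Defs
  imports "HOL-Analysis.Analysis"
begin

text \<open>A point of the tangent bundle over a chart of the
surface is a pair (x,y) with x, y in R^2 (induced coordinates (x^i,y^i)).\<close>

type_synonym pt = "(real^2) \<times> (real^2)"
type_synonym fn = "pt \<Rightarrow> real"

definition dderiv :: "pt \<Rightarrow> fn \<Rightarrow> fn" where
  "dderiv v f p = deriv (\<lambda>t. f (p + t *\<^sub>R v)) 0"

definition px :: "2 \<Rightarrow> fn \<Rightarrow> fn" where
  "px i f = dderiv (axis i 1, 0) f"

definition py :: "2 \<Rightarrow> fn \<Rightarrow> fn" where
  "py i f = dderiv (0, axis i 1) f"

fun dd :: "pt list \<Rightarrow> fn \<Rightarrow> fn" where
  "dd [] f = f"
| "dd (v # vs) f = dderiv v (dd vs f)"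

definition smooth_on :: "pt set \<Rightarrow> fn \<Rightarrow> bool" where
  "smooth_on A f \<longleftrightarrow> (\<forall>vs. dd vs f differentiable_on A)"

definition conic :: "pt set \<Rightarrow> bool" where
  "conic A \<longleftrightarrow> open A \<and> A \<subseteq> {p. snd p \<noteq> 0} \<and>
     (\<forall>p\<in>A. \<forall>c::real. c > 0 \<longrightarrow> (fst p, c *\<^sub>R snd p) \<in> A)"

definition homog :: "pt set \<Rightarrow> real \<Rightarrow> fn \<Rightarrow> bool" where
  "homog A r f \<longleftrightarrow> (\<forall>p\<in>A. \<forall>c::real. c > 0 \<longrightarrow>
      f (fst p, c *\<^sub>R snd p) = c powr r * f p)"

definition sqF :: "fn \<Rightarrow> fn" where
  "sqF F = (\<lambda>q. (F q)\<^sup>2)"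

definition gmat :: "fn \<Rightarrow> pt \<Rightarrow> real^2^2" where
  "gmat F p = (\<chi> i j. 1/2 * py i (py j (sqF F)) p)"

definition ginv :: "fn \<Rightarrow> pt \<Rightarrow> real^2^2" where
  "ginv F p = matrix_inv (gmat F p)"

definition Cijk :: "fn \<Rightarrow> 2 \<Rightarrow> 2 \<Rightarrow> 2 \<Rightarrow> fn" where
  "Cijk F i j k p = 1/4 * py i (py j (py k (sqF F))) p"

definition lowl :: "fn \<Rightarrow> 2 \<Rightarrow> fn" where
  "lowl F i = py i F"

definition upl :: "fn \<Rightarrow> 2 \<Rightarrow> fn" where
  "upl F i p = snd p $ i / F p"

definition upm :: "fn \<Rightarrow> (2 \<Rightarrow> fn) \<Rightarrow> 2 \<Rightarrow> fn" where
  "upm F m i p = (\<Sum>j\<in>UNIV. ginv F p $ i $ j * m j p)"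

definition pseudo_finsler :: "pt set \<Rightarrow> fn \<Rightarrow> bool" where
  "pseudo_finsler A F \<longleftrightarrow> conic A \<and> smooth_on A F \<and> homog A 1 F \<and>
     (\<forall>p\<in>A. det (gmat F p) \<noteq> 0)"

definition berwald_frame :: "pt set \<Rightarrow> fn \<Rightarrow> real \<Rightarrow> (2 \<Rightarrow> fn) \<Rightarrow> bool" where
  "berwald_frame A F eps m \<longleftrightarrow> eps \<in> {1, -1} \<and> (\<forall>i. smooth_on A (m i)) \<and>
     (\<forall>p\<in>A. \<forall>i j. gmat F p $ i $ j = lowl F i p * lowl F j p + eps * m i p * m j p)"

definition main_scalar :: "pt set \<Rightarrow> fn \<Rightarrow> (2 \<Rightarrow> fn) \<Rightarrow> fn \<Rightarrow> bool" where
  "main_scalar A F m I \<longleftrightarrow>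
     (\<forall>p\<in>A. \<forall>i j k. F p * Cijk F i j k p = I p * m i p * m j p * m k p)"

text \<open>geodesic spray coefficients: S = y^i d_i - 2 G^i dot-d_i,
  G^i = 1/4 g^{il} (y^k d_k dot-d_l F^2 - d_l F^2)\<close>
definition Gsp :: "fn \<Rightarrow> 2 \<Rightarrow> fn" where
  "Gsp F i p = 1/4 * (\<Sum>l\<in>UNIV. ginv F p $ i $ l *
      ((\<Sum>k\<in>UNIV. snd p $ k * px k (py l (sqF F)) p) - px l (sqF F) p))"

definition Gij :: "fn \<Rightarrow> 2 \<Rightarrow> 2 \<Rightarrow> fn" where
  "Gij F i j = py j (Gsp F i)"

definition hdelta :: "fn \<Rightarrow> 2 \<Rightarrow> fn \<Rightarrow> fn" where
  "hdelta F i f p = px i f p - (\<Sum>j\<in>UNIV. Gij F j i p * py j f p)"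

text \<open>f_{;1}, f_{;2}, f_{,1}, f_{,2}\<close>
definition sc1 :: "fn \<Rightarrow> fn" where
  "sc1 f p = (\<Sum>i\<in>UNIV. snd p $ i * py i f p)"

definition sc2 :: "fn \<Rightarrow> real \<Rightarrow> (2 \<Rightarrow> fn) \<Rightarrow> fn \<Rightarrow> fn" where
  "sc2 F eps m f p = eps * F p * (\<Sum>i\<in>UNIV. upm F m i p * py i f p)"

definition cm1 :: "fn \<Rightarrow> fn \<Rightarrow> fn" where
  "cm1 F f p = (\<Sum>i\<in>UNIV. upl F i p * hdelta F i f p)"

definition cm2 :: "fn \<Rightarrow> real \<Rightarrow> (2 \<Rightarrow> fn) \<Rightarrow> fn \<Rightarrow> fn" where
  "cm2 F eps m f p = eps * (\<Sum>i\<in>UNIV. upm F m i p * hdelta F i f p)"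

definition aniso_conformal :: "pt set \<Rightarrow> fn \<Rightarrow> real \<Rightarrow> (2 \<Rightarrow> fn) \<Rightarrow> fn \<Rightarrow> bool" where
  "aniso_conformal A F eps m \<phi> \<longleftrightarrow> smooth_on A \<phi> \<and> homog A 0 \<phi> \<and>
     (\<forall>p\<in>A. (F p)\<^sup>2 * (\<Sum>i\<in>UNIV. \<Sum>j\<in>UNIV.
         (py i (py j \<phi>) p + py i \<phi> p * py j \<phi> p) * upm F m i p * upm F m j p) + eps \<noteq> 0)"

definition sigma_fn :: "fn \<Rightarrow> real \<Rightarrow> (2 \<Rightarrow> fn) \<Rightarrow> fn \<Rightarrow> fn \<Rightarrow> fn" where
  "sigma_fn F eps m I \<phi> p =
     sc2 F eps m (sc2 F eps m \<phi>) p + eps * I p * sc2 F eps m \<phi> p + 2 * (sc2 F eps m \<phi> p)\<^sup>2"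

definition rho_fn :: "fn \<Rightarrow> real \<Rightarrow> (2 \<Rightarrow> fn) \<Rightarrow> fn \<Rightarrow> fn \<Rightarrow> fn" where
  "rho_fn F eps m I \<phi> p = 1 / (sigma_fn F eps m I \<phi> p + eps - (sc2 F eps m \<phi> p)\<^sup>2)"

definition Kfac :: "fn \<Rightarrow> real \<Rightarrow> (2 \<Rightarrow> fn) \<Rightarrow> fn \<Rightarrow> fn" where
  "Kfac F eps m \<phi> p = sc2 F eps m \<phi> p * cm1 F \<phi> p + sc2 F eps m (cm1 F \<phi>) p
      - 2 * cm2 F eps m \<phi> p"

definition Q_fn :: "fn \<Rightarrow> real \<Rightarrow> (2 \<Rightarrow> fn) \<Rightarrow> fn \<Rightarrow> fn \<Rightarrow> fn" where
  "Q_fn F eps m I \<phi> p = eps * rho_fn F eps m I \<phi> p * (F p)\<^sup>2 * Kfac F eps m \<phi> p / 2"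

definition P_fn :: "fn \<Rightarrow> real \<Rightarrow> (2 \<Rightarrow> fn) \<Rightarrow> fn \<Rightarrow> fn \<Rightarrow> fn" where
  "P_fn F eps m I \<phi> p = (- rho_fn F eps m I \<phi> p * (F p)\<^sup>2 * sc2 F eps m \<phi> p * Kfac F eps m \<phi> p
      + (F p)\<^sup>2 * cm1 F \<phi> p) / 2"

end

theory Submission
  imports Defs
begin


lemma path_deriv_aux:
  assumes "(f has_derivative f') (at q)"
  shows "((\<lambda>t. f (q + t *\<^sub>R v)) has_real_derivative f' v) (at 0)"
proof -
  have l: "linear f'" using assms has_derivative_linear by blast
  have h1: "((\<lambda>t::real. q + t *\<^sub>R v) has_derivative (\<lambda>t. t *\<^sub>R v)) (at 0)"
    by (auto intro!: derivative_eq_intros)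
  have h2: "(f has_derivative f') (at (q + 0 *\<^sub>R v))" using assms by simp
  have "((\<lambda>t. f (q + t *\<^sub>R v)) has_derivative (\<lambda>t. f' (t *\<^sub>R v))) (at 0)"
    using diff_chain_at[OF h1 h2] by (simp add: o_def)
  moreover have "(\<lambda>t. f' (t *\<^sub>R v)) = (\<lambda>t. f' v * t)"
    using linear_scale[OF l] by (auto simp: mult.commute)
  ultimately show ?thesis by (simp add: has_field_derivative_def)
qed

lemma dderiv_eq:
  assumes "(f has_derivative f') (at q)"
  shows "dderiv v f q = f' v"
  unfolding dderiv_def using path_deriv_aux[OF assms] DERIV_imp_deriv by blast

lemma path_deriv:
  assumes "f differentiable (at q)"
  shows "((\<lambda>t. f (q + t *\<^sub>R v)) has_real_derivative dderiv v f q) (at 0)"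
  using assms path_deriv_aux dderiv_eq unfolding differentiable_def by metis



lemma dd_add: "f differentiable (at q) \<Longrightarrow> g differentiable (at q) \<Longrightarrow>
  dderiv v (\<lambda>x. f x + g x) q = dderiv v f q + dderiv v g q"
  unfolding dderiv_def[of v "\<lambda>x. f x + g x"]
  by (intro DERIV_imp_deriv) (auto intro!: derivative_eq_intros path_deriv)

lemma dd_diff: "f differentiable (at q) \<Longrightarrow> g differentiable (at q) \<Longrightarrow>
  dderiv v (\<lambda>x. f x - g x) q = dderiv v f q - dderiv v g q"
  unfolding dderiv_def[of v "\<lambda>x. f x - g x"]
  by (intro DERIV_imp_deriv) (auto intro!: derivative_eq_intros path_deriv)

lemma dd_mult: "f differentiable (at q) \<Longrightarrow> g differentiable (at q) \<Longrightarrow>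
  dderiv v (\<lambda>x. f x * g x) q = f q * dderiv v g q + g q * dderiv v f q"
proof -
  assume a: "f differentiable (at q)" "g differentiable (at q)"
  have "((\<lambda>t. f (q + t *\<^sub>R v) * g (q + t *\<^sub>R v)) has_real_derivative
     dderiv v f q * g (q + 0 *\<^sub>R v) + dderiv v g q * f (q + 0 *\<^sub>R v)) (at 0)"
    by (rule DERIV_mult[OF path_deriv[OF a(1)] path_deriv[OF a(2)]])
  then show ?thesis unfolding dderiv_def[of v "\<lambda>x. f x * g x"]
    by (intro DERIV_imp_deriv) (simp add: algebra_simps)
qed

lemma dd_const: "dderiv v (\<lambda>x. c) q = 0"
  unfolding dderiv_def by simp

lemma dd_cong_ev:
  assumes "open A" "q \<in> A" "\<And>x. x \<in> A \<Longrightarrow> f x = g x"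
  shows "dderiv v f q = dderiv v g q"
proof -
  obtain e where e: "e > 0" "ball q e \<subseteq> A" using assms(1,2) open_contains_ball by blast
  have "eventually (\<lambda>t::real. t \<in> ball 0 (e / (norm v + 1))) (nhds 0)"
    using e by (intro eventually_nhds_in_open) (auto intro!: divide_pos_pos add_nonneg_pos)
  then have "eventually (\<lambda>t::real. dist t 0 < e / (norm v + 1)) (nhds 0)"
    by (rule eventually_mono) (simp add: dist_commute)
  then have "eventually (\<lambda>t. f (q + t *\<^sub>R v) = g (q + t *\<^sub>R v)) (nhds 0)"
  proof (rule eventually_mono)
    fix t :: real assume "dist t 0 < e / (norm v + 1)"
    then have "\<bar>t\<bar> * (norm v + 1) < e"
      by (simp add: pos_less_divide_eq add_nonneg_pos)
    moreover have "\<bar>t\<bar> * norm v \<le> \<bar>t\<bar> * (norm v + 1)" by (simp add: mult_left_mono)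
    ultimately have "dist q (q + t *\<^sub>R v) < e" by (simp add: dist_norm)
    then show "f (q + t *\<^sub>R v) = g (q + t *\<^sub>R v)" using e assms(3) by (meson mem_ball subsetD)
  qed
  then show ?thesis unfolding dderiv_def by (rule deriv_cong_ev) simp
qed

coinductive sm :: "pt set \<Rightarrow> fn \<Rightarrow> bool" for A where
  smI: "f differentiable_on A \<Longrightarrow> (\<forall>v. \<exists>g. sm A g \<and> (\<forall>q\<in>A. dderiv v f q = g q)) \<Longrightarrow> sm A f"

lemma sm_diffon: "sm A f \<Longrightarrow> f differentiable_on A"
  by (erule sm.cases) auto

lemma sm_at: "open A \<Longrightarrow> sm A f \<Longrightarrow> q \<in> A \<Longrightarrow> f differentiable (at q)"
  using sm_diffon differentiable_on_eq_differentiable_at by blast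

lemma sm_cong:
  assumes "open A" "sm A f" "\<And>x. x \<in> A \<Longrightarrow> f x = g x"
  shows "sm A g"
proof -
  have "\<exists>f. sm A f \<and> (\<forall>x\<in>A. f x = g x)" using assms by blast
  then show ?thesis
  proof (coinduction arbitrary: g rule: sm.coinduct)
    case (sm g)
    then obtain f where f: "sm A f" "\<forall>x\<in>A. f x = g x" by blast
    have "g differentiable_on A"
      unfolding differentiable_on_eq_differentiable_at[OF assms(1)]
    proof
      fix x assume x: "x \<in> A"
      then obtain f' where "(f has_derivative f') (at x)"
        using sm_at[OF assms(1) f(1) x] unfolding differentiable_def by blast
      then have "(g has_derivative f') (at x)"
        by (rule has_derivative_transform_within_open[OF _ assms(1) x]) (use f in auto)
      then show "g differentiable at x" unfolding differentiable_def by blast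
    qed
    moreover have "\<forall>v. \<exists>h. sm A h \<and> (\<forall>q\<in>A. dderiv v g q = h q)"
    proof
      fix v
      from f(1) have "\<forall>v. \<exists>h. sm A h \<and> (\<forall>q\<in>A. dderiv v f q = h q)"
        by (cases rule: sm.cases) auto
      then obtain h where h: "sm A h" "\<forall>q\<in>A. dderiv v f q = h q" by blast
      have "\<forall>q\<in>A. dderiv v g q = h q"
        using h(2) dd_cong_ev[OF assms(1), of _ f g v] f(2) by auto
      then show "\<exists>h. sm A h \<and> (\<forall>q\<in>A. dderiv v g q = h q)" using h(1) by blast
    qed
    ultimately show ?case by blast
  qed
qed

lemma sm_dderiv: "open A \<Longrightarrow> sm A f \<Longrightarrow> sm A (dderiv v f)"
  by (erule sm.cases) (metis sm_cong)

lemma smooth_sm: "smooth_on A f \<Longrightarrow> sm A f"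
proof -
  assume a: "smooth_on A f"
  have "sm A (dd vs f)" for vs
  proof (coinduction arbitrary: vs rule: sm.coinduct)
    case sm
    show ?case using a unfolding smooth_on_def
      by (metis dd.simps(2))
  qed
  from this[of "[]"] show ?thesis by simp
qed



lemma dd_inverse: "f differentiable (at q) \<Longrightarrow> f q \<noteq> 0 \<Longrightarrow>
  dderiv v (\<lambda>x. inverse (f x)) q = - dderiv v f q * (inverse (f q) * inverse (f q))"
proof -
  assume a: "f differentiable (at q)" "f q \<noteq> 0"
  have "((\<lambda>t. inverse (f (q + t *\<^sub>R v))) has_real_derivative
     - (dderiv v f q * inverse (f (q + 0 *\<^sub>R v) ^ Suc (Suc 0)))) (at 0)"
    by (rule DERIV_inverse_fun[OF path_deriv[OF a(1)]]) (use a in simp)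
  then show ?thesis unfolding dderiv_def[of v "\<lambda>x. inverse (f x)"]
    by (intro DERIV_imp_deriv) (simp add: power2_eq_square)
qed

inductive alg :: "pt set \<Rightarrow> fn \<Rightarrow> bool" for A where
  base: "sm A f \<Longrightarrow> alg A f"
| cst: "alg A (\<lambda>x. c)"
| add: "alg A f \<Longrightarrow> alg A g \<Longrightarrow> alg A (\<lambda>x. f x + g x)"
| mul: "alg A f \<Longrightarrow> alg A g \<Longrightarrow> alg A (\<lambda>x. f x * g x)"
| inv: "sm A f \<Longrightarrow> (\<forall>x\<in>A. f x \<noteq> 0) \<Longrightarrow> alg A (\<lambda>x. inverse (f x))"

lemma alg_at: assumes "open A" "alg A f" "q \<in> A" shows "f differentiable (at q)"
  using assms(2,3) by (induction rule: alg.induct) (auto simp: sm_at[OF assms(1)])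

lemma sm_witness: assumes "sm A f" shows "\<exists>g. sm A g \<and> (\<forall>q\<in>A. dderiv v f q = g q)"
proof -
  from assms have "\<forall>v. \<exists>g. sm A g \<and> (\<forall>q\<in>A. dderiv v f q = g q)"
    by (rule sm.cases) blast
  then show ?thesis by blast
qed

lemma alg_dd: assumes opA: "open A" shows "alg A f \<Longrightarrow> \<exists>g. alg A g \<and> (\<forall>q\<in>A. dderiv v f q = g q)"
proof (induction rule: alg.induct)
  case (base f)
  then show ?case using sm_witness[OF base(1)] alg.base by blast
next
  case (cst c)
  show ?case by (rule exI[of _ "\<lambda>x. 0"]) (auto simp: dd_const intro: alg.cst)
next
  case (add f g)
  then obtain f' g' where a: "alg A f'" "\<forall>q\<in>A. dderiv v f q = f' q" "alg A g'" "\<forall>q\<in>A. dderiv v g q = g' q"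
    by blast
  have "\<forall>q\<in>A. dderiv v (\<lambda>x. f x + g x) q = f' q + g' q"
  proof
    fix q assume q: "q \<in> A"
    show "dderiv v (\<lambda>x. f x + g x) q = f' q + g' q"
      using dd_add[OF alg_at[OF opA add(1) q] alg_at[OF opA add(2) q]] a q by simp
  qed
  then show ?case using alg.add[OF a(1) a(3)] by blast
next
  case (mul f g)
  then obtain f' g' where a: "alg A f'" "\<forall>q\<in>A. dderiv v f q = f' q" "alg A g'" "\<forall>q\<in>A. dderiv v g q = g' q"
    by blast
  have "\<forall>q\<in>A. dderiv v (\<lambda>x. f x * g x) q = f q * g' q + g q * f' q"
  proof
    fix q assume q: "q \<in> A"
    show "dderiv v (\<lambda>x. f x * g x) q = f q * g' q + g q * f' q"
      using dd_mult[OF alg_at[OF opA mul(1) q] alg_at[OF opA mul(2) q]] a q by simp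
  qed
  then show ?case using alg.add[OF alg.mul[OF mul(1) a(3)] alg.mul[OF mul(2) a(1)]] by blast
next
  case (inv f)
  then obtain f' where "sm A f'" "\<forall>q\<in>A. dderiv v f q = f' q"
    using sm_witness by blast
  have "alg A (\<lambda>x. (-1) * (f' x * (inverse (f x) * inverse (f x))))"
    by (intro alg.mul alg.cst alg.base alg.inv) (use inv \<open>sm A f'\<close> in auto)
  moreover have "\<forall>q\<in>A. dderiv v (\<lambda>x. inverse (f x)) q = (-1) * (f' q * (inverse (f q) * inverse (f q)))"
  proof
    fix q assume q: "q \<in> A"
    show "dderiv v (\<lambda>x. inverse (f x)) q = (-1) * (f' q * (inverse (f q) * inverse (f q)))"
      using dd_inverse[OF sm_at[OF opA inv(1) q]] inv(2) q \<open>\<forall>q\<in>A. dderiv v f q = f' q\<close> by simp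
  qed
  ultimately show ?case by blast
qed

lemma alg_sm: assumes opA: "open A" shows "alg A f \<Longrightarrow> sm A f"
proof (coinduction arbitrary: f rule: sm.coinduct)
  case (sm f)
  have "f differentiable_on A"
    using alg_at[OF opA sm] differentiable_on_eq_differentiable_at[OF opA] by blast
  moreover have "\<exists>g. (alg A g \<or> sm A g) \<and> (\<forall>q\<in>A. dderiv v f q = g q)" for v
    using alg_dd[OF opA sm, of v] by blast
  ultimately show ?case by blast
qed

context fixes A :: "pt set" assumes opA: "open A"
begin

lemma sm_const[simp]: "sm A (\<lambda>x. c)"
  using alg_sm[OF opA alg.cst] .
lemma sm_add[simp]: "sm A f \<Longrightarrow> sm A g \<Longrightarrow> sm A (\<lambda>x. f x + g x)"
  using alg_sm[OF opA alg.add[OF alg.base alg.base]] .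
lemma sm_mult[simp]: "sm A f \<Longrightarrow> sm A g \<Longrightarrow> sm A (\<lambda>x. f x * g x)"
  using alg_sm[OF opA alg.mul[OF alg.base alg.base]] .
lemma sm_inverse: "sm A f \<Longrightarrow> (\<forall>x\<in>A. f x \<noteq> 0) \<Longrightarrow> sm A (\<lambda>x. inverse (f x))"
  using alg_sm[OF opA alg.inv] .
lemma sm_minus[simp]: "sm A f \<Longrightarrow> sm A (\<lambda>x. - f x)"
  using sm_mult[of "\<lambda>x. -1" f] by simp
lemma sm_diff[simp]: "sm A f \<Longrightarrow> sm A g \<Longrightarrow> sm A (\<lambda>x. f x - g x)"
  using sm_add[of f "\<lambda>x. - g x"] by simp
lemma sm_divide: "sm A f \<Longrightarrow> sm A g \<Longrightarrow> (\<forall>x\<in>A. g x \<noteq> 0) \<Longrightarrow> sm A (\<lambda>x. f x / g x)"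
  using sm_mult[of f "\<lambda>x. inverse (g x)"] sm_inverse[of g] by (simp add: divide_inverse)
lemma sm_divc[simp]: "sm A f \<Longrightarrow> sm A (\<lambda>x. f x / c)"
  using sm_mult[of f "\<lambda>x. inverse c"] by (simp add: divide_inverse)
lemma sm_power2[simp]: "sm A f \<Longrightarrow> sm A (\<lambda>x. (f x)\<^sup>2)"
  using sm_mult[of f f] by (simp add: power2_eq_square)
lemma sm_dd[simp]: "sm A f \<Longrightarrow> sm A (dderiv v f)"
  using sm_dderiv[OF opA] .
lemma sm_py[simp]: "sm A f \<Longrightarrow> sm A (py i f)"
  unfolding py_def by simp
lemma sm_px[simp]: "sm A f \<Longrightarrow> sm A (px i f)"
  unfolding px_def by simp
lemma sm_sum2[simp]: fixes f :: "2 \<Rightarrow> fn" shows "(\<And>i. sm A (f i)) \<Longrightarrow> sm A (\<lambda>x. \<Sum>i\<in>UNIV. f i x)"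
  by (simp add: sum_2)

lemma dd_snd: "dderiv v (\<lambda>x. snd x $ k) q = snd v $ k"
proof -
  have e: "(\<lambda>t. snd (q + t *\<^sub>R v) $ k) = (\<lambda>t. snd q $ k + t * snd v $ k)" by auto
  have "((\<lambda>t. snd q $ k + t * snd v $ k) has_real_derivative snd v $ k) (at 0)"
    using DERIV_add[OF DERIV_const DERIV_cmult_Id[of "snd v $ k"]] by (simp add: mult.commute)
  then have "((\<lambda>t. snd (q + t *\<^sub>R v) $ k) has_real_derivative snd v $ k) (at 0)"
    unfolding e .
  then show ?thesis unfolding dderiv_def by (rule DERIV_imp_deriv)
qed

lemma sm_snd[simp]: "sm A (\<lambda>x. snd x $ k)"
proof (rule sm.intros)
  show "(\<lambda>x. snd x $ k) differentiable_on A"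
    by (rule bounded_linear_imp_differentiable_on) (intro bounded_linear_compose[OF bounded_linear_vec_nth] bounded_linear_snd)
  show "\<forall>v. \<exists>g. sm A g \<and> (\<forall>q\<in>A. dderiv v (\<lambda>x. snd x $ k) q = g q)"
  proof
    fix v show "\<exists>g. sm A g \<and> (\<forall>q\<in>A. dderiv v (\<lambda>x. snd x $ k) q = g q)"
      by (rule exI[of _ "\<lambda>x. snd v $ k"]) (simp add: dd_snd)
  qed
qed

end



lemma dd_lin:
  assumes "f differentiable (at q)"
  shows "dderiv (0, y) f q = y $ 1 * py 1 f q + y $ 2 * py 2 f q"
proof -
  obtain f' where f': "(f has_derivative f') (at q)" using assms unfolding differentiable_def by blast
  have l: "linear f'" using f' has_derivative_linear by blast
  have e: "(0::real^2, y) = y $ 1 *\<^sub>R (0, axis 1 1) + y $ 2 *\<^sub>R (0, axis 2 1)"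
    by (auto simp: vec_eq_iff forall_2 axis_def)
  have "f' (0, y) = y $ 1 * f' (0, axis 1 1) + y $ 2 * f' (0, axis 2 1)"
    by (subst e, simp only: linear_add[OF l] linear_scale[OF l], simp)
  then show ?thesis using dderiv_eq[OF f'] unfolding py_def by simp
qed

lemma euler1:
  assumes "open A" "homog A 1 f" "f differentiable (at q)" "q \<in> A"
  shows "snd q $ 1 * py 1 f q + snd q $ 2 * py 2 f q = f q"
proof -
  have "eventually (\<lambda>t::real. t \<in> ball 0 1) (nhds 0)" by (intro eventually_nhds_in_open) auto
  then have ev: "eventually (\<lambda>t. f (q + t *\<^sub>R (0, snd q)) = (1 + t) * f q) (nhds 0)"
  proof (rule eventually_mono)
    fix t :: real assume "t \<in> ball 0 1"
    then have t: "1 + t > 0" by (auto simp: dist_real_def)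
    have "q + t *\<^sub>R (0, snd q) = (fst q, (1 + t) *\<^sub>R snd q)"
      by (cases q) (auto simp: algebra_simps)
    then show "f (q + t *\<^sub>R (0, snd q)) = (1 + t) * f q"
      using assms(2,4) t unfolding homog_def by auto
  qed
  have "dderiv (0, snd q) f q = deriv (\<lambda>t. (1 + t) * f q) 0"
    unfolding dderiv_def by (rule deriv_cong_ev[OF ev refl])
  also have "\<dots> = f q"
    by (rule DERIV_imp_deriv) (auto intro!: derivative_eq_intros)
  finally show ?thesis using dd_lin[OF assms(3)] by simp
qed

lemma euler0:
  assumes "open A" "homog A 0 f" "f differentiable (at q)" "q \<in> A"
  shows "snd q $ 1 * py 1 f q + snd q $ 2 * py 2 f q = 0"
proof -
  have "eventually (\<lambda>t::real. t \<in> ball 0 1) (nhds 0)" by (intro eventually_nhds_in_open) auto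
  then have ev: "eventually (\<lambda>t. f (q + t *\<^sub>R (0, snd q)) = f q) (nhds 0)"
  proof (rule eventually_mono)
    fix t :: real assume "t \<in> ball 0 1"
    then have t: "1 + t > 0" by (auto simp: dist_real_def)
    have "q + t *\<^sub>R (0, snd q) = (fst q, (1 + t) *\<^sub>R snd q)"
      by (cases q) (auto simp: algebra_simps)
    then show "f (q + t *\<^sub>R (0, snd q)) = f q"
      using assms(2,4) t unfolding homog_def by auto
  qed
  have "dderiv (0, snd q) f q = deriv (\<lambda>t. f q) 0"
    unfolding dderiv_def by (rule deriv_cong_ev[OF ev refl])
  also have "\<dots> = 0" by simp
  finally show ?thesis using dd_lin[OF assms(3)] by simp
qed

locale L =
  fixes A :: "pt set" and F :: fn and eps :: real and m :: "2 \<Rightarrow> fn"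
    and I :: fn and \<phi> :: fn
  assumes pf: "pseudo_finsler A F"
    and bf: "berwald_frame A F eps m"
    and ms: "main_scalar A F m I"
    and ac: "aniso_conformal A F eps m \<phi>"
begin

lemma opA[simp]: "open A" using pf unfolding pseudo_finsler_def conic_def by blast
lemma smF[simp]: "sm A F" using pf smooth_sm unfolding pseudo_finsler_def by blast
lemma smphi[simp]: "sm A \<phi>" using ac smooth_sm unfolding aniso_conformal_def by blast
lemma smm[simp]: "sm A (m i)" using bf smooth_sm unfolding berwald_frame_def by blast
lemma eps2: "eps * eps = 1" using bf unfolding berwald_frame_def by auto
lemma detnz: "q \<in> A \<Longrightarrow> det (gmat F q) \<noteq> 0" using pf unfolding pseudo_finsler_def by blast
lemma Gbf: "q \<in> A \<Longrightarrow> gmat F q $ i $ j = py i F q * py j F q + eps * m i q * m j q"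
  using bf unfolding berwald_frame_def lowl_def by blast

lemma at: "sm A f \<Longrightarrow> q \<in> A \<Longrightarrow> f differentiable (at q)"
  using sm_at[OF opA] .

lemma py_add[simp]: "sm A f \<Longrightarrow> sm A g \<Longrightarrow> q \<in> A \<Longrightarrow> py i (\<lambda>x. f x + g x) q = py i f q + py i g q"
  unfolding py_def using dd_add at by blast
lemma py_diff[simp]: "sm A f \<Longrightarrow> sm A g \<Longrightarrow> q \<in> A \<Longrightarrow> py i (\<lambda>x. f x - g x) q = py i f q - py i g q"
  unfolding py_def using dd_diff at by blast
lemma py_mult[simp]: "sm A f \<Longrightarrow> sm A g \<Longrightarrow> q \<in> A \<Longrightarrow> py i (\<lambda>x. f x * g x) q = f q * py i g q + g q * py i f q"
  unfolding py_def using dd_mult at by blast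
lemma py_const[simp]: "py i (\<lambda>x. c) q = 0"
  unfolding py_def using dd_const by blast
lemma py_divc[simp]: "sm A f \<Longrightarrow> q \<in> A \<Longrightarrow> py i (\<lambda>x. f x / c) q = py i f q / c"
proof -
  assume a: "sm A f" "q \<in> A"
  have "py i (\<lambda>x. f x / c) q = py i (\<lambda>x. f x * inverse c) q" by (simp add: divide_inverse)
  also have "\<dots> = py i f q / c" using a opA by (simp add: divide_inverse)
  finally show ?thesis .
qed
lemma py_power2[simp]: "sm A f \<Longrightarrow> q \<in> A \<Longrightarrow> py i (\<lambda>x. (f x)\<^sup>2) q = 2 * f q * py i f q"
proof -
  assume a: "sm A f" "q \<in> A"
  have "py i (\<lambda>x. (f x)\<^sup>2) q = py i (\<lambda>x. f x * f x) q" by (simp add: power2_eq_square)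
  also have "\<dots> = 2 * f q * py i f q" using a opA by simp
  finally show ?thesis .
qed
lemma py_snd[simp]: "py i (\<lambda>x. snd x $ k) q = (if k = i then 1 else 0)"
  unfolding py_def dd_snd[OF opA] by (simp add: axis_def)
lemma py_cong: "q \<in> A \<Longrightarrow> (\<And>x. x \<in> A \<Longrightarrow> f x = g x) \<Longrightarrow> py i f q = py i g q"
  unfolding py_def using dd_cong_ev[OF opA] by blast

lemma smsq[simp]: "sm A (sqF F)"
  unfolding sqF_def using sm_power2[OF opA smF] .

lemma smG[simp]: "sm A (\<lambda>x. gmat F x $ i $ j)"
  unfolding gmat_def using opA by simp

lemma py_sq: "x \<in> A \<Longrightarrow> py k (sqF F) x = 2 * F x * py k F x"
proof -
  assume x: "x \<in> A"
  have "py k (sqF F) x = py k (\<lambda>x. F x * F x) x"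
    by (rule py_cong[OF x]) (simp add: sqF_def power2_eq_square)
  then show ?thesis using x opA by simp
qed

lemma Gformula: "q \<in> A \<Longrightarrow> gmat F q $ j $ k = py j F q * py k F q + F q * py j (py k F) q"
proof -
  assume q: "q \<in> A"
  have "py j (py k (sqF F)) q = py j (\<lambda>x. 2 * (F x * py k F x)) q"
    by (rule py_cong[OF q]) (simp add: py_sq)
  then show ?thesis using q opA by (simp add: gmat_def algebra_simps)
qed

lemma Fnz: "q \<in> A \<Longrightarrow> F q \<noteq> 0"
proof
  assume q: "q \<in> A" and F0: "F q = 0"
  have "det (gmat F q) = 0" using Gformula[OF q] F0 by (simp add: det_2)
  then show False using detnz[OF q] by simp
qed

lemma Delta_nz: "q \<in> A \<Longrightarrow> py 1 F q * m 2 q - py 2 F q * m 1 q \<noteq> 0"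
proof
  assume q: "q \<in> A" and d: "py 1 F q * m 2 q - py 2 F q * m 1 q = 0"
  have "det (gmat F q) = eps * (py 1 F q * m 2 q - py 2 F q * m 1 q)^2"
    using Gbf[OF q] by (simp add: det_2 power2_eq_square algebra_simps)
  then show False using detnz[OF q] d by simp
qed

end



lemma two_cases: "(i = (1::2) \<Longrightarrow> P) \<Longrightarrow> (i = 2 \<Longrightarrow> P) \<Longrightarrow> P"
  using exhaust_2 by blast

context L begin

lemma GGi: "q \<in> A \<Longrightarrow> gmat F q ** ginv F q = mat 1"
proof -
  assume q: "q \<in> A"
  have "invertible (gmat F q)" using detnz[OF q] invertible_det_nz by blast
  then have "\<exists>A'. gmat F q ** A' = mat 1 \<and> A' ** gmat F q = mat 1" unfolding invertible_def by blast
  then show ?thesis unfolding ginv_def matrix_inv_def by (rule someI2_ex) blast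
qed

lemma GGi_comp: "q \<in> A \<Longrightarrow>
  gmat F q $1$1 * ginv F q $1$1 + gmat F q $1$2 * ginv F q $2$1 = 1 \<and>
  gmat F q $1$1 * ginv F q $1$2 + gmat F q $1$2 * ginv F q $2$2 = 0 \<and>
  gmat F q $2$1 * ginv F q $1$1 + gmat F q $2$2 * ginv F q $2$1 = 0 \<and>
  gmat F q $2$1 * ginv F q $1$2 + gmat F q $2$2 * ginv F q $2$2 = 1"
proof -
  assume q: "q \<in> A"
  have e: "(gmat F q ** ginv F q) $ i $ j = mat 1 $ i $ j" for i j using GGi[OF q] by simp
  show ?thesis using e[of 1 1] e[of 1 2] e[of 2 1] e[of 2 2]
    by (simp add: matrix_matrix_mult_def sum_2 mat_def)
qed

lemma Gi_explicit: "q \<in> A \<Longrightarrow>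
  ginv F q $1$1 = gmat F q $2$2 / det (gmat F q) \<and>
  ginv F q $1$2 = - gmat F q $1$2 / det (gmat F q) \<and>
  ginv F q $2$1 = - gmat F q $2$1 / det (gmat F q) \<and>
  ginv F q $2$2 = gmat F q $1$1 / det (gmat F q)"
proof -
  assume q: "q \<in> A"
  define a where "a = gmat F q $1$1" define b where "b = gmat F q $1$2"
  define c where "c = gmat F q $2$1" define d where "d = gmat F q $2$2"
  define h11 where "h11 = ginv F q $1$1" define h12 where "h12 = ginv F q $1$2"
  define h21 where "h21 = ginv F q $2$1" define h22 where "h22 = ginv F q $2$2"
  have D: "det (gmat F q) = a * d - b * c" by (simp add: det_2 a_def b_def c_def d_def)
  have nz: "a * d - b * c \<noteq> 0" using detnz[OF q] D by simp
  have E: "a * h11 + b * h21 = 1" "a * h12 + b * h22 = 0" "c * h11 + d * h21 = 0" "c * h12 + d * h22 = 1"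
    using GGi_comp[OF q] by (simp_all add: a_def b_def c_def d_def h11_def h12_def h21_def h22_def)
  have "(a * d - b * c) * h11 = d" "(a * d - b * c) * h12 = - b"
       "(a * d - b * c) * h21 = - c" "(a * d - b * c) * h22 = a"
    using E by algebra+
  then show ?thesis unfolding D using nz
    by (simp add: a_def b_def c_def d_def h11_def h12_def h21_def h22_def field_simps)
qed

lemma smdet[simp]: "sm A (\<lambda>x. det (gmat F x))"
  unfolding det_2 using opA by simp

lemma smGi[simp]: "sm A (\<lambda>x. ginv F x $ i $ j)"
proof -
  have nz: "\<forall>x\<in>A. det (gmat F x) \<noteq> 0" using detnz by blast
  have s: "sm A (\<lambda>x. f x / det (gmat F x))" if "sm A f" for f
    using sm_divide[OF opA that smdet nz] .
  show ?thesis
  proof (cases i rule: two_cases; cases j rule: two_cases)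
    assume "i = 1" "j = 1" then show ?thesis
      using sm_cong[OF opA s[OF smG[of 2 2]]] Gi_explicit by simp
  next
    assume "i = 1" "j = 2" then show ?thesis
      using sm_cong[OF opA s[OF sm_minus[OF opA smG[of 1 2]]]] Gi_explicit by simp
  next
    assume "i = 2" "j = 1" then show ?thesis
      using sm_cong[OF opA s[OF sm_minus[OF opA smG[of 2 1]]]] Gi_explicit by simp
  next
    assume "i = 2" "j = 2" then show ?thesis
      using sm_cong[OF opA s[OF smG[of 1 1]]] Gi_explicit by simp
  qed
qed

lemma smu[simp]: "sm A (upm F m i)"
  unfolding upm_def using opA by simp

lemma Gu: "q \<in> A \<Longrightarrow> gmat F q $ j $ 1 * upm F m 1 q + gmat F q $ j $ 2 * upm F m 2 q = m j q"
proof -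
  assume q: "q \<in> A"
  have E: "(gmat F q ** ginv F q) $ j $ k = mat 1 $ j $ k" for k using GGi[OF q] by simp
  have "gmat F q $ j $ 1 * upm F m 1 q + gmat F q $ j $ 2 * upm F m 2 q
     = (gmat F q ** ginv F q) $ j $ 1 * m 1 q + (gmat F q ** ginv F q) $ j $ 2 * m 2 q"
    by (simp add: upm_def matrix_matrix_mult_def sum_2 algebra_simps)
  also have "\<dots> = m j q" unfolding E by (cases j rule: two_cases) (auto simp: mat_def)
  finally show ?thesis .
qed

lemma lu_mu: "q \<in> A \<Longrightarrow>
  py 1 F q * upm F m 1 q + py 2 F q * upm F m 2 q = 0 \<and>
  m 1 q * upm F m 1 q + m 2 q * upm F m 2 q = eps"
proof -
  assume q: "q \<in> A"
  define l1 where "l1 = py 1 F q" define l2 where "l2 = py 2 F q"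
  define m1 where "m1 = m 1 q" define m2 where "m2 = m 2 q"
  define u1 where "u1 = upm F m 1 q" define u2 where "u2 = upm F m 2 q"
  have E: "(l1 * l1 + eps * m1 * m1) * u1 + (l1 * l2 + eps * m1 * m2) * u2 = m1"
          "(l2 * l1 + eps * m2 * m1) * u1 + (l2 * l2 + eps * m2 * m2) * u2 = m2"
    using Gu[OF q, of 1] Gu[OF q, of 2] Gbf[OF q]
    by (simp_all add: l1_def l2_def m1_def m2_def u1_def u2_def)
  have nz: "l1 * m2 - l2 * m1 \<noteq> 0" using Delta_nz[OF q] by (simp add: l1_def l2_def m1_def m2_def)
  have "(l1 * m2 - l2 * m1) * (l1 * u1 + l2 * u2) =
     m2 * ((l1 * l1 + eps * m1 * m1) * u1 + (l1 * l2 + eps * m1 * m2) * u2)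
   - m1 * ((l2 * l1 + eps * m2 * m1) * u1 + (l2 * l2 + eps * m2 * m2) * u2)" by algebra
  then have "(l1 * m2 - l2 * m1) * (l1 * u1 + l2 * u2) = 0" unfolding E by simp
  then have a: "l1 * u1 + l2 * u2 = 0" using nz by simp
  then have "m1 * (eps * (m1 * u1 + m2 * u2) - 1) = 0" "m2 * (eps * (m1 * u1 + m2 * u2) - 1) = 0"
    using E by algebra+
  moreover have "m1 \<noteq> 0 \<or> m2 \<noteq> 0" using nz by auto
  ultimately have "eps * (m1 * u1 + m2 * u2) = 1" by auto
  then have "m1 * u1 + m2 * u2 = eps" using eps2 by algebra
  then show ?thesis using a by (simp add: l1_def l2_def m1_def m2_def u1_def u2_def)
qed

lemma EF: "q \<in> A \<Longrightarrow> snd q $ 1 * py 1 F q + snd q $ 2 * py 2 F q = F q"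
  using euler1[OF opA _ at[OF smF]] pf unfolding pseudo_finsler_def by blast

lemma Ephi: "q \<in> A \<Longrightarrow> snd q $ 1 * py 1 \<phi> q + snd q $ 2 * py 2 \<phi> q = 0"
  using euler0[OF opA _ at[OF smphi]] ac unfolding aniso_conformal_def by blast

lemma EF2: "q \<in> A \<Longrightarrow> snd q $ 1 * py j (py 1 F) q + snd q $ 2 * py j (py 2 F) q = 0"
proof -
  assume q: "q \<in> A"
  have "py j (\<lambda>x. snd x $ 1 * py 1 F x + snd x $ 2 * py 2 F x - F x) q = py j (\<lambda>x. 0) q"
    by (rule py_cong[OF q]) (simp add: EF)
  then show ?thesis using q by (cases j rule: two_cases) simp_all
qed

lemma my: "q \<in> A \<Longrightarrow> m 1 q * snd q $ 1 + m 2 q * snd q $ 2 = 0"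
proof -
  assume q: "q \<in> A"
  define l1 where "l1 = py 1 F q" define l2 where "l2 = py 2 F q"
  define m1 where "m1 = m 1 q" define m2 where "m2 = m 2 q"
  define y1 where "y1 = snd q $ 1" define y2 where "y2 = snd q $ 2"
  have G: "gmat F q $ j $ 1 * y1 + gmat F q $ j $ 2 * y2 = py j F q * F q" for j
  proof -
    have "gmat F q $ j $ 1 * y1 + gmat F q $ j $ 2 * y2 =
      py j F q * (y1 * l1 + y2 * l2) + F q * (y1 * py j (py 1 F) q + y2 * py j (py 2 F) q)"
      unfolding Gformula[OF q] by (simp add: l1_def l2_def algebra_simps)
    then show ?thesis using EF[OF q] EF2[OF q, of j] by (simp add: l1_def l2_def y1_def y2_def)
  qed
  have E: "(l1 * l1 + eps * m1 * m1) * y1 + (l1 * l2 + eps * m1 * m2) * y2 = l1 * F q"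
          "(l2 * l1 + eps * m2 * m1) * y1 + (l2 * l2 + eps * m2 * m2) * y2 = l2 * F q"
    using G[of 1] G[of 2] Gbf[OF q] by (simp_all add: l1_def l2_def m1_def m2_def)
  have yl: "y1 * l1 + y2 * l2 = F q" using EF[OF q] by (simp add: l1_def l2_def y1_def y2_def)
  have "m1 * (eps * (m1 * y1 + m2 * y2)) = 0" "m2 * (eps * (m1 * y1 + m2 * y2)) = 0"
    using E yl by algebra+
  moreover have "m1 \<noteq> 0 \<or> m2 \<noteq> 0" using Delta_nz[OF q] by (auto simp: m1_def m2_def)
  moreover have "eps \<noteq> 0" using eps2 by auto
  ultimately show ?thesis by (auto simp: m1_def m2_def y1_def y2_def)
qed

end



context L begin

lemma Fh: "q \<in> A \<Longrightarrow> F q * py i (py j F) q = eps * m i q * m j q"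
  using Gformula[of q i j] Gbf[of q i j] by simp

lemma wl: "q \<in> A \<Longrightarrow>
  py 1 F q * (F q * (upm F m 1 q * py 1 (upm F m 1) q + upm F m 2 q * py 2 (upm F m 1) q))
+ py 2 F q * (F q * (upm F m 1 q * py 1 (upm F m 2) q + upm F m 2 q * py 2 (upm F m 2) q)) = - eps"
proof -
  assume q: "q \<in> A"
  have d: "py i (\<lambda>x. py 1 F x * upm F m 1 x + py 2 F x * upm F m 2 x) q = py i (\<lambda>x. 0) q" for i
    by (rule py_cong[OF q]) (use lu_mu in simp)
  have d1: "py 1 F q * py i (upm F m 1) q + upm F m 1 q * py i (py 1 F) q
          + (py 2 F q * py i (upm F m 2) q + upm F m 2 q * py i (py 2 F) q) = 0" for i
    using d[of i] q by simp
  have mu: "m 1 q * upm F m 1 q + m 2 q * upm F m 2 q = eps" using lu_mu[OF q] by blast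
  note h = Fh[OF q, of 1 1] Fh[OF q, of 1 2] Fh[OF q, of 2 1] Fh[OF q, of 2 2]
  show ?thesis using d1[of 1] d1[of 2] mu h eps2 by algebra
qed

lemma wm: "q \<in> A \<Longrightarrow>
  m 1 q * (F q * (upm F m 1 q * py 1 (upm F m 1) q + upm F m 2 q * py 2 (upm F m 1) q))
+ m 2 q * (F q * (upm F m 1 q * py 1 (upm F m 2) q + upm F m 2 q * py 2 (upm F m 2) q)) = - eps * I q"
proof -
  assume q: "q \<in> A"
  let ?E = "\<lambda>x. gmat F x $1$1 * upm F m 1 x * upm F m 1 x + gmat F x $1$2 * upm F m 1 x * upm F m 2 x
             + gmat F x $2$1 * upm F m 2 x * upm F m 1 x + gmat F x $2$2 * upm F m 2 x * upm F m 2 x"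
  have E: "?E x = eps" if x: "x \<in> A" for x
  proof -
    have "?E x = upm F m 1 x * (gmat F x $1$1 * upm F m 1 x + gmat F x $1$2 * upm F m 2 x)
        + upm F m 2 x * (gmat F x $2$1 * upm F m 1 x + gmat F x $2$2 * upm F m 2 x)"
      by (simp add: algebra_simps)
    also have "\<dots> = eps" using Gu[OF x, of 1] Gu[OF x, of 2] lu_mu[OF x] by (simp add: algebra_simps)
    finally show ?thesis .
  qed
  have d: "py i ?E q = py i (\<lambda>x. eps) q" for i
    by (rule py_cong[OF q]) (use E in simp)
  have dG: "py i (\<lambda>x. gmat F x $ j $ k) q = 2 * Cijk F i j k q" for i j k
    using q by (simp add: gmat_def Cijk_def)
  have d1: "py i ?E q = 0" for i using d[of i] by simp
  define u1 where "u1 = upm F m 1 q" define u2 where "u2 = upm F m 2 q"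
  define G where "G j k = gmat F q $ j $ k" for j k
  define C where "C i j k = Cijk F i j k q" for i j k
  define du where "du i j = py i (upm F m j) q" for i j
  have X: "2 * C i 1 1 * u1 * u1 + G 1 1 * (du i 1 * u1 + u1 * du i 1)
         + 2 * C i 1 2 * u1 * u2 + G 1 2 * (du i 1 * u2 + u1 * du i 2)
         + 2 * C i 2 1 * u2 * u1 + G 2 1 * (du i 2 * u1 + u2 * du i 1)
         + 2 * C i 2 2 * u2 * u2 + G 2 2 * (du i 2 * u2 + u2 * du i 2) = 0" for i
    using d1[of i] q by (simp add: dG algebra_simps u1_def u2_def G_def C_def du_def)
  have Gb: "G j k = py j F q * py k F q + eps * m j q * m k q" for j k
    unfolding G_def using Gbf[OF q] .
  have Cm: "F q * C i j k = I q * m i q * m j q * m k q" for i j k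
    using ms q unfolding main_scalar_def C_def by blast
  have lu: "py 1 F q * u1 + py 2 F q * u2 = 0" and mu: "m 1 q * u1 + m 2 q * u2 = eps"
    using lu_mu[OF q] by (auto simp: u1_def u2_def)
  show ?thesis unfolding u1_def[symmetric] u2_def[symmetric] du_def[symmetric]
    using X[of 1] X[of 2] Gb[of 1 1] Gb[of 1 2] Gb[of 2 1] Gb[of 2 2]
      Cm[of 1 1 1] Cm[of 1 1 2] Cm[of 1 2 1] Cm[of 1 2 2] Cm[of 2 1 1] Cm[of 2 1 2] Cm[of 2 2 1] Cm[of 2 2 2]
      lu mu eps2 by algebra
qed

lemma key: "q \<in> A \<Longrightarrow>
  F q * (upm F m 1 q * (py 1 (upm F m 1) q * py 1 \<phi> q + py 1 (upm F m 2) q * py 2 \<phi> q)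
       + upm F m 2 q * (py 2 (upm F m 1) q * py 1 \<phi> q + py 2 (upm F m 2) q * py 2 \<phi> q))
  = - I q * (upm F m 1 q * py 1 \<phi> q + upm F m 2 q * py 2 \<phi> q)"
proof -
  assume q: "q \<in> A"
  define D where "D = py 1 F q * m 2 q - py 2 F q * m 1 q"
  have Dnz: "D \<noteq> 0" using Delta_nz[OF q] D_def by simp
  have Fnz': "F q \<noteq> 0" using Fnz[OF q] .
  have "D * (F q * (upm F m 1 q * (py 1 (upm F m 1) q * py 1 \<phi> q + py 1 (upm F m 2) q * py 2 \<phi> q)
       + upm F m 2 q * (py 2 (upm F m 1) q * py 1 \<phi> q + py 2 (upm F m 2) q * py 2 \<phi> q))
     + I q * (upm F m 1 q * py 1 \<phi> q + upm F m 2 q * py 2 \<phi> q)) * F q = 0"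
    unfolding D_def using wl[OF q] wm[OF q] EF[OF q] my[OF q] lu_mu[OF q] Ephi[OF q] eps2 by algebra
  then have "F q * (upm F m 1 q * (py 1 (upm F m 1) q * py 1 \<phi> q + py 1 (upm F m 2) q * py 2 \<phi> q)
       + upm F m 2 q * (py 2 (upm F m 1) q * py 1 \<phi> q + py 2 (upm F m 2) q * py 2 \<phi> q))
     + I q * (upm F m 1 q * py 1 \<phi> q + upm F m 2 q * py 2 \<phi> q) = 0" using Dnz Fnz' by simp
  then show ?thesis by algebra
qed

end



lemma sc2_fun: "sc2 F eps m f = (\<lambda>p. eps * F p * (upm F m 1 p * py 1 f p + upm F m 2 p * py 2 f p))"
  by (rule ext) (simp add: sc2_def sum_2)
lemma upl_fun: "upl F i = (\<lambda>p. snd p $ i / F p)"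
  by (rule ext) (simp add: upl_def)
lemma Gsp_fun: "Gsp F i = (\<lambda>p. 1/4 * (ginv F p $ i $ 1 *
      ((snd p $ 1 * px 1 (py 1 (sqF F)) p + snd p $ 2 * px 2 (py 1 (sqF F)) p) - px 1 (sqF F) p)
    + ginv F p $ i $ 2 *
      ((snd p $ 1 * px 1 (py 2 (sqF F)) p + snd p $ 2 * px 2 (py 2 (sqF F)) p) - px 2 (sqF F) p)))"
  by (rule ext) (simp add: Gsp_def sum_2)
lemma hdelta_fun: "hdelta F i f = (\<lambda>p. px i f p - (py i (Gsp F 1) p * py 1 f p + py i (Gsp F 2) p * py 2 f p))"
  by (rule ext) (simp add: hdelta_def Gij_def sum_2)
lemma cm1_fun: "cm1 F f = (\<lambda>p. upl F 1 p * hdelta F 1 f p + upl F 2 p * hdelta F 2 f p)"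
  by (rule ext) (simp add: cm1_def sum_2)
lemma cm2_fun: "cm2 F eps m f = (\<lambda>p. eps * (upm F m 1 p * hdelta F 1 f p + upm F m 2 p * hdelta F 2 f p))"
  by (rule ext) (simp add: cm2_def sum_2)
lemma Kfac_fun: "Kfac F eps m f = (\<lambda>p. sc2 F eps m f p * cm1 F f p + sc2 F eps m (cm1 F f) p
      - 2 * cm2 F eps m f p)"
  by (rule ext) (simp add: Kfac_def)

context L begin

lemma sm_sc2[simp]: "sm A f \<Longrightarrow> sm A (sc2 F eps m f)"
  unfolding sc2_fun by simp
lemma sm_upl[simp]: "sm A (upl F i)"
  unfolding upl_fun using sm_divide[OF opA sm_snd[OF opA] smF] Fnz by blast
lemma sm_Gsp[simp]: "sm A (Gsp F i)"
  unfolding Gsp_fun by simp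
lemma sm_hdelta[simp]: "sm A f \<Longrightarrow> sm A (hdelta F i f)"
  unfolding hdelta_fun by simp
lemma sm_cm1[simp]: "sm A f \<Longrightarrow> sm A (cm1 F f)"
  unfolding cm1_fun by simp
lemma sm_cm2[simp]: "sm A f \<Longrightarrow> sm A (cm2 F eps m f)"
  unfolding cm2_fun by simp
lemma sm_K[simp]: "sm A (Kfac F eps m \<phi>)"
  unfolding Kfac_fun by simp

definition Dsm :: fn where
  "Dsm x = (F x)\<^sup>2 * (\<Sum>i\<in>UNIV. \<Sum>j\<in>UNIV.
         (py i (py j \<phi>) x + py i \<phi> x * py j \<phi> x) * upm F m i x * upm F m j x) + eps"

lemma Dsm_nz: "x \<in> A \<Longrightarrow> Dsm x \<noteq> 0"
  using ac unfolding aniso_conformal_def Dsm_def by blast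

lemma sm_Dsm[simp]: "sm A Dsm"
proof -
  have "Dsm = (\<lambda>x. (F x)\<^sup>2 * (\<Sum>i\<in>UNIV. \<Sum>j\<in>UNIV.
         (py i (py j \<phi>) x + py i \<phi> x * py j \<phi> x) * upm F m i x * upm F m j x) + eps)"
    by (rule ext) (simp add: Dsm_def)
  then show ?thesis by (simp add: sum_2)
qed

lemma sigma_id: "q \<in> A \<Longrightarrow>
  sigma_fn F eps m I \<phi> q + eps - (sc2 F eps m \<phi> q)\<^sup>2 = Dsm q"
proof -
  assume q: "q \<in> A"
  define u1 where "u1 = upm F m 1 q" define u2 where "u2 = upm F m 2 q"
  have e1: "sc2 F eps m (sc2 F eps m \<phi>) q =
     eps * F q * (u1 * (eps * (F q * (u1 * py 1 (py 1 \<phi>) q + py 1 \<phi> q * py 1 (upm F m 1) q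
                        + u2 * py 1 (py 2 \<phi>) q + py 2 \<phi> q * py 1 (upm F m 2) q)
                        + py 1 F q * (u1 * py 1 \<phi> q + u2 * py 2 \<phi> q)))
                + u2 * (eps * (F q * (u1 * py 2 (py 1 \<phi>) q + py 1 \<phi> q * py 2 (upm F m 1) q
                        + u2 * py 2 (py 2 \<phi>) q + py 2 \<phi> q * py 2 (upm F m 2) q)
                        + py 2 F q * (u1 * py 1 \<phi> q + u2 * py 2 \<phi> q))))"
    unfolding sc2_fun[of F eps m "sc2 F eps m \<phi>"] unfolding sc2_fun
    using q by (simp add: algebra_simps u1_def u2_def)
  have lu: "py 1 F q * u1 + py 2 F q * u2 = 0"
    using lu_mu[OF q] by (auto simp: u1_def u2_def)
  show ?thesis
    unfolding sigma_fn_def e1 unfolding sc2_fun Dsm_def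
    using key[OF q] lu eps2 by (simp add: sum_2 u1_def[symmetric] u2_def[symmetric] power2_eq_square) algebra
qed

end



lemma sc2_pt: "sc2 F eps m f q = eps * F q * (upm F m 1 q * py 1 f q + upm F m 2 q * py 2 f q)"
  by (simp add: sc2_def sum_2)

context L begin

lemma rho_eq: "q \<in> A \<Longrightarrow> rho_fn F eps m I \<phi> q = 1 / Dsm q"
  unfolding rho_fn_def using sigma_id by simp

lemma sm_rho[simp]: "sm A (rho_fn F eps m I \<phi>)"
  using sm_cong[OF opA sm_divide[OF opA sm_const[OF opA] sm_Dsm] _] Dsm_nz rho_eq by auto

lemma sm_Q[simp]: "sm A (Q_fn F eps m I \<phi>)"
proof -
  have "Q_fn F eps m I \<phi> = (\<lambda>p. eps * rho_fn F eps m I \<phi> p * (F p)\<^sup>2 * Kfac F eps m \<phi> p / 2)"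
    by (rule ext) (simp add: Q_fn_def)
  then show ?thesis by simp
qed

lemma Pf: "P_fn F eps m I \<phi> = (\<lambda>x. - eps * sc2 F eps m \<phi> x * Q_fn F eps m I \<phi> x + (F x)\<^sup>2 * cm1 F \<phi> x / 2)"
proof (rule ext)
  fix x
  show "P_fn F eps m I \<phi> x = - eps * sc2 F eps m \<phi> x * Q_fn F eps m I \<phi> x + (F x)\<^sup>2 * cm1 F \<phi> x / 2"
    unfolding P_fn_def Q_fn_def using eps2 by algebra
qed

lemma py_P: "q \<in> A \<Longrightarrow> py i (P_fn F eps m I \<phi>) q =
   - eps * (sc2 F eps m \<phi> q * py i (Q_fn F eps m I \<phi>) q + Q_fn F eps m I \<phi> q * py i (sc2 F eps m \<phi>) q)
   + F q * py i F q * cm1 F \<phi> q + (F q)\<^sup>2 / 2 * py i (cm1 F \<phi>) q"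
  unfolding Pf by (simp add: algebra_simps)

lemma final: "q \<in> A \<Longrightarrow>
     sc2 F eps m \<phi> q * P_fn F eps m I \<phi> q
     + sc2 F eps m (P_fn F eps m I \<phi>) q
     + eps * sc2 F eps m \<phi> q * sc2 F eps m (Q_fn F eps m I \<phi>) q
     - (I q * sc2 F eps m \<phi> q + 1) * Q_fn F eps m I \<phi> q
     - (F q)\<^sup>2 * cm2 F eps m \<phi> q = 0"
proof -
  assume q: "q \<in> A"
  define s where "s = sc2 F eps m \<phi> q"
  define Qv where "Qv = Q_fn F eps m I \<phi> q"
  define dQ where "dQ i = py i (Q_fn F eps m I \<phi>) q" for i
  define ds where "ds i = py i (sc2 F eps m \<phi>) q" for i
  define c where "c = cm1 F \<phi> q"
  define dc where "dc i = py i (cm1 F \<phi>) q" for i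
  define c2 where "c2 = cm2 F eps m \<phi> q"
  define r where "r = rho_fn F eps m I \<phi> q"
  define K where "K = Kfac F eps m \<phi> q"
  define Fv where "Fv = F q"
  define l where "l i = py i F q" for i
  define u where "u i = upm F m i q" for i
  define X where "X = eps * Fv * (u 1 * ds 1 + u 2 * ds 2) + eps * I q * s + 2 * s\<^sup>2 + eps - s\<^sup>2"
  have rX: "r * X = 1"
  proof -
    have "sigma_fn F eps m I \<phi> q + eps - (sc2 F eps m \<phi> q)\<^sup>2 \<noteq> 0"
      using sigma_id[OF q] Dsm_nz[OF q] by simp
    moreover have "sigma_fn F eps m I \<phi> q + eps - (sc2 F eps m \<phi> q)\<^sup>2 = X"
      unfolding X_def sigma_fn_def sc2_pt[of F eps m "sc2 F eps m \<phi>" q]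
      by (simp add: s_def Fv_def u_def ds_def)
    ultimately show ?thesis unfolding r_def rho_fn_def by simp
  qed
  have Qq: "Qv = eps * r * Fv\<^sup>2 * K / 2"
    by (simp add: Q_fn_def Qv_def r_def Fv_def K_def)
  have Kq: "K = s * c + eps * Fv * (u 1 * dc 1 + u 2 * dc 2) - 2 * c2"
    unfolding K_def Kfac_def sc2_pt[of F eps m "cm1 F \<phi>" q]
    by (simp add: s_def c_def Fv_def u_def dc_def c2_def)
  have Pq: "P_fn F eps m I \<phi> q = - eps * s * Qv + Fv\<^sup>2 * c / 2"
    by (simp add: Pf s_def Qv_def Fv_def c_def)
  have sP: "sc2 F eps m (P_fn F eps m I \<phi>) q = eps * Fv * (
       u 1 * (- eps * (s * dQ 1 + Qv * ds 1) + Fv * l 1 * c + Fv\<^sup>2 / 2 * dc 1)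
     + u 2 * (- eps * (s * dQ 2 + Qv * ds 2) + Fv * l 2 * c + Fv\<^sup>2 / 2 * dc 2))"
    unfolding sc2_pt[of F eps m "P_fn F eps m I \<phi>" q] py_P[OF q] by (simp add: s_def dQ_def Qv_def ds_def Fv_def l_def c_def dc_def u_def)
  have sQ: "sc2 F eps m (Q_fn F eps m I \<phi>) q = eps * Fv * (u 1 * dQ 1 + u 2 * dQ 2)"
    unfolding sc2_pt[of F eps m "Q_fn F eps m I \<phi>" q] by (simp add: Fv_def u_def dQ_def)
  have lu: "l 1 * u 1 + l 2 * u 2 = 0"
    using lu_mu[OF q] by (auto simp: l_def u_def)
  have e2: "eps * eps = 1" by (rule eps2)
  have main: "s * (- eps * s * Qv + Fv\<^sup>2 * c / 2) + eps * Fv * (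
       u 1 * (- eps * (s * dQ 1 + Qv * ds 1) + Fv * l 1 * c + Fv\<^sup>2 / 2 * dc 1)
     + u 2 * (- eps * (s * dQ 2 + Qv * ds 2) + Fv * l 2 * c + Fv\<^sup>2 / 2 * dc 2))
     + eps * s * (eps * Fv * (u 1 * dQ 1 + u 2 * dQ 2))
     - (I q * s + 1) * Qv - Fv\<^sup>2 * c2 = (Fv\<^sup>2 * K / 2) * (1 - r * X)"
    unfolding Qq X_def Kq using e2 lu by algebra
  show ?thesis
    unfolding sP sQ Pq unfolding s_def[symmetric] Qv_def[symmetric] Fv_def[symmetric] c2_def[symmetric]
    using main rX by simp
qed

end

theorem lemma2p8:
  fixes A :: "pt set" and F :: fn and eps :: real and m :: "2 \<Rightarrow> fn"
    and I :: fn and \<phi> :: fn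
  assumes "pseudo_finsler A F"
    and "berwald_frame A F eps m"
    and "main_scalar A F m I"
    and "aniso_conformal A F eps m \<phi>"
  shows "\<forall>p\<in>A.
     sc2 F eps m \<phi> p * P_fn F eps m I \<phi> p
     + sc2 F eps m (P_fn F eps m I \<phi>) p
     + eps * sc2 F eps m \<phi> p * sc2 F eps m (Q_fn F eps m I \<phi>) p
     - (I p * sc2 F eps m \<phi> p + 1) * Q_fn F eps m I \<phi> p
     - (F p)\<^sup>2 * cm2 F eps m \<phi> p = 0"
proof -
  interpret L A F eps m I \<phi> using assms by unfold_locales
  show ?thesis using final by blast
qed

end
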